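(* Let $X$ be a Banach space (real or complex) and let $x\in X$ be non-zero. If $x$ is a right symmetric point of $X$ and $x$ is smooth, then $x$ is a left symmetric point of $X$.
   Context: In a normed space $X$ over $\mathbb{K}$, $x\perp_{BJ}y$ means $\|x+\lambda y\|\ge\|x\|$ for all $\lambda\in\mathbb{K}$; $x$ is a left symmetric point if $x\perp_{BJ}y$ implies $y\perp_{BJ}x$ for all $y\in X$, and a right symmetric point if $y\perp_{BJ}x$ implies $x\perp_{BJ}y$ for all $y\in X$. A non-zero $x$ is smooth if there is a unique norm-one $F\in X^*$ with $F(x)=\|x\|$. *)

theory Defs
  imports "HOL-Analysis.Analysis"
begin

text \<open>A normed space over a scalar field K is modelled as a type with a norm together
 with a scalar multiplication sm :: K => X => X.  For K = real we use scaleR;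
 a complex normed space is a real normed space together with a complex scalar
 multiplication extending scaleR and compatible with the norm.\<close>

definition complex_scaling :: "(complex \<Rightarrow> 'a::real_normed_vector \<Rightarrow> 'a) \<Rightarrow> bool" where
  "complex_scaling cs \<longleftrightarrow>
     (\<forall>r x. cs (complex_of_real r) x = r *\<^sub>R x) \<and>
     (\<forall>a b x. cs (a + b) x = cs a x + cs b x) \<and>
     (\<forall>a x y. cs a (x + y) = cs a x + cs a y) \<and>
     (\<forall>a b x. cs (a * b) x = cs a (cs b x)) \<and>
     (\<forall>a x. norm (cs a x) = cmod a * norm x)"

definition BJ_orth :: "('k \<Rightarrow> 'a \<Rightarrow> 'a) \<Rightarrow> 'a::real_normed_vector \<Rightarrow> 'a \<Rightarrow> bool" where
  "BJ_orth sm x y \<longleftrightarrow> (\<forall>c. norm (x + sm c y) \<ge> norm x)"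

definition left_symmetric :: "('k \<Rightarrow> 'a \<Rightarrow> 'a) \<Rightarrow> 'a::real_normed_vector \<Rightarrow> bool" where
  "left_symmetric sm x \<longleftrightarrow> (\<forall>y. BJ_orth sm x y \<longrightarrow> BJ_orth sm y x)"

definition right_symmetric :: "('k \<Rightarrow> 'a \<Rightarrow> 'a) \<Rightarrow> 'a::real_normed_vector \<Rightarrow> bool" where
  "right_symmetric sm x \<longleftrightarrow> (\<forall>y. BJ_orth sm y x \<longrightarrow> BJ_orth sm x y)"

definition dual_functional :: "('k::real_normed_field \<Rightarrow> 'a \<Rightarrow> 'a) \<Rightarrow> ('a::real_normed_vector \<Rightarrow> 'k) \<Rightarrow> bool" where
  "dual_functional sm F \<longleftrightarrow> bounded_linear F \<and> (\<forall>c v. F (sm c v) = c * F v)"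

definition smooth_point :: "('k::real_normed_field \<Rightarrow> 'a \<Rightarrow> 'a) \<Rightarrow> 'a::real_normed_vector \<Rightarrow> bool" where
  "smooth_point sm x \<longleftrightarrow> x \<noteq> 0 \<and>
     (\<exists>!F. dual_functional sm F \<and> onorm F = 1 \<and> F x = of_real (norm x))"

end

theory Submission
  imports Defs
begin


definition ExtS :: "'a::real_normed_vector \<Rightarrow> 'a set \<Rightarrow> ('a \<times> real) set set" where
 "ExtS x Y = {M. (\<forall>u a b. (u,a)\<in>M \<longrightarrow> (u,b)\<in>M \<longrightarrow> a = b)
    \<and> (\<forall>u a v b. (u,a)\<in>M \<longrightarrow> (v,b)\<in>M \<longrightarrow> (u+v,a+b)\<in>M)
    \<and> (\<forall>u a r. (u,a)\<in>M \<longrightarrow> (r *\<^sub>R u, r*a)\<in>M)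
    \<and> (\<forall>u a. (u,a)\<in>M \<longrightarrow> a \<le> norm u)
    \<and> {(r *\<^sub>R x + u, r * norm x) | r u. u \<in> Y} \<subseteq> M}"

lemma ExtS_D:
  assumes "M \<in> ExtS x Y"
  shows "\<And>u a b. (u,a)\<in>M \<Longrightarrow> (u,b)\<in>M \<Longrightarrow> a = b"
   and "\<And>u a v b. (u,a)\<in>M \<Longrightarrow> (v,b)\<in>M \<Longrightarrow> (u+v,a+b)\<in>M"
   and "\<And>u a r. (u,a)\<in>M \<Longrightarrow> (r *\<^sub>R u, r*a)\<in>M"
   and "\<And>u a. (u,a)\<in>M \<Longrightarrow> a \<le> norm u"
   and "{(r *\<^sub>R x + u, r * norm x) | r u. u \<in> Y} \<subseteq> M"
  using assms unfolding ExtS_def by (simp_all only: mem_Collect_eq)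

lemma ExtS_I:
  assumes "\<And>u a b. (u,a)\<in>M \<Longrightarrow> (u,b)\<in>M \<Longrightarrow> a = b"
   and "\<And>u a v b. (u,a)\<in>M \<Longrightarrow> (v,b)\<in>M \<Longrightarrow> (u+v,a+b)\<in>M"
   and "\<And>u a r. (u,a)\<in>M \<Longrightarrow> (r *\<^sub>R u, r*a)\<in>M"
   and "\<And>u a. (u,a)\<in>M \<Longrightarrow> a \<le> norm u"
   and "{(r *\<^sub>R x + u, r * norm x) | r u. u \<in> Y} \<subseteq> M"
  shows "M \<in> ExtS x Y"
  unfolding ExtS_def mem_Collect_eq using assms by blast

lemma orth_bound:
  fixes x :: "'a::real_normed_vector"
  assumes Y: "subspace Y" and o: "\<forall>u\<in>Y. norm x \<le> norm (x + u)" and u: "u \<in> Y"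
  shows "\<bar>r\<bar> * norm x \<le> norm (r *\<^sub>R x + u)"
proof (cases "r = 0")
  case True then show ?thesis by simp
next
  case False
  have "(1/r) *\<^sub>R u \<in> Y" using Y u by (simp add: subspace_def)
  then have "norm x \<le> norm (x + (1/r) *\<^sub>R u)" using o by blast
  moreover have "r *\<^sub>R x + u = r *\<^sub>R (x + (1/r) *\<^sub>R u)" using False
    by (simp add: scaleR_add_right)
  ultimately show ?thesis by (simp add: mult_left_mono)
qed

lemma M0_in:
  fixes x :: "'a::real_normed_vector"
  assumes Y: "subspace Y" and o: "\<forall>u\<in>Y. norm x \<le> norm (x + u)"
  shows "{(r *\<^sub>R x + u, r * norm x) | r u. u \<in> Y} \<in> ExtS x Y"
proof -
  let ?M = "{(r *\<^sub>R x + u, r * norm x) | r u. u \<in> Y}"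
  have g: "a = b" if h1: "(w,a)\<in>?M" and h2: "(w,b)\<in>?M" for w a b
  proof -
    obtain r u where ru: "w = r *\<^sub>R x + u" "a = r * norm x" "u\<in>Y" using h1 by blast
    obtain s v where sv: "w = s *\<^sub>R x + v" "b = s * norm x" "v\<in>Y" using h2 by blast
    have "u - v \<in> Y" using Y ru sv by (simp add: subspace_diff)
    then have "\<bar>r - s\<bar> * norm x \<le> norm ((r - s) *\<^sub>R x + (u - v))"
      using orth_bound[OF Y o] by blast
    also have "(r - s) *\<^sub>R x + (u - v) = 0" using ru sv by (simp add: algebra_simps)
    finally have h: "\<bar>r - s\<bar> * norm x \<le> 0" by simp
    have "\<bar>(r - s) * norm x\<bar> \<le> 0" using h by (simp add: abs_mult)
    then have "(r - s) * norm x = 0" by linarith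
    then show ?thesis using ru sv by (simp add: left_diff_distrib)
  qed
  have a: "(w+w',a+b)\<in>?M" if h1: "(w,a)\<in>?M" and h2: "(w',b)\<in>?M" for w w' a b
  proof -
    obtain r u where ru: "w = r *\<^sub>R x + u" "a = r * norm x" "u\<in>Y" using h1 by blast
    obtain s v where sv: "w' = s *\<^sub>R x + v" "b = s * norm x" "v\<in>Y" using h2 by blast
    have "u + v \<in> Y" using Y ru sv by (simp add: subspace_add)
    moreover have "w + w' = (r+s) *\<^sub>R x + (u+v)" "a + b = (r+s) * norm x"
      using ru sv by (auto simp: algebra_simps)
    ultimately show ?thesis by blast
  qed
  have s: "(c *\<^sub>R w, c*a)\<in>?M" if h1: "(w,a)\<in>?M" for w a c
  proof -
    obtain r u where ru: "w = r *\<^sub>R x + u" "a = r * norm x" "u\<in>Y" using h1 by blast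
    have "c *\<^sub>R u \<in> Y" using Y ru by (simp add: subspace_scale)
    moreover have "c *\<^sub>R w = (c*r) *\<^sub>R x + c *\<^sub>R u" "c * a = (c*r) * norm x"
      using ru by (auto simp: algebra_simps)
    ultimately show ?thesis by blast
  qed
  have d: "a \<le> norm w" if h1: "(w,a)\<in>?M" for w a
  proof -
    obtain r u where ru: "w = r *\<^sub>R x + u" "a = r * norm x" "u\<in>Y" using h1 by blast
    have "a \<le> \<bar>r\<bar> * norm x" using ru by (simp add: mult_right_mono)
    also have "\<dots> \<le> norm w" using orth_bound[OF Y o ru(3)] ru by simp
    finally show ?thesis .
  qed
  show ?thesis unfolding ExtS_def using g a s d by blast
qed

lemma chain_in:
  assumes C: "C \<in> chains (ExtS x Y)" and ne: "C \<noteq> {}"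
  shows "\<Union>C \<in> ExtS x Y"
proof -
  have CS: "C \<subseteq> ExtS x Y" and tot: "\<And>A B. A\<in>C \<Longrightarrow> B\<in>C \<Longrightarrow> A \<subseteq> B \<or> B \<subseteq> A"
    using C by (auto simp: chains_def chain_subset_def)
  have two: "\<exists>Z\<in>C. p \<in> Z \<and> q \<in> Z" if h: "p \<in> \<Union>C" "q \<in> \<Union>C" for p q
  proof -
    obtain A B where "A\<in>C" "B\<in>C" "p\<in>A" "q\<in>B" using h by blast
    then show ?thesis using tot[of A B] by blast
  qed
  obtain A0 where A0: "A0 \<in> C" using ne by blast
  have m0: "{(r *\<^sub>R x + u, r * norm x) | r u. u \<in> Y} \<subseteq> \<Union>C"
    using A0 CS ExtS_D(5) by blast
  show ?thesis
  proof (rule ExtS_I[OF _ _ _ _ m0])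
    fix u a b assume "(u,a) \<in> \<Union>C" "(u,b) \<in> \<Union>C"
    then obtain Z where "Z\<in>C" "(u,a)\<in>Z" "(u,b)\<in>Z" using two by blast
    then show "a = b" using CS ExtS_D by blast
  next
    fix u a v b assume "(u,a) \<in> \<Union>C" "(v,b) \<in> \<Union>C"
    then obtain Z where "Z\<in>C" "(u,a)\<in>Z" "(v,b)\<in>Z" using two by blast
    then show "(u+v,a+b) \<in> \<Union>C" using CS ExtS_D by blast
  next
    fix u a r assume "(u,a) \<in> \<Union>C"
    then obtain Z where Z: "Z\<in>C" "(u,a)\<in>Z" by blast
    then have "Z \<in> ExtS x Y" using CS by blast
    from ExtS_D(3)[OF this Z(2)] show "(r *\<^sub>R u, r*a) \<in> \<Union>C" using Z by blast
  next
    fix u a assume "(u,a) \<in> \<Union>C"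
    then obtain Z where Z: "Z\<in>C" "(u,a)\<in>Z" by blast
    then have "Z \<in> ExtS x Y" using CS by blast
    from ExtS_D(4)[OF this Z(2)] show "a \<le> norm u" .
  qed
qed

lemma extend:
  fixes x :: "'a::real_normed_vector"
  assumes Y: "subspace Y" and M: "M \<in> ExtS x Y" and z: "z \<notin> fst ` M"
  shows "\<exists>M'\<in>ExtS x Y. M \<subseteq> M' \<and> M' \<noteq> M"
proof -
  have g: "\<And>u a b. (u,a)\<in>M \<Longrightarrow> (u,b)\<in>M \<Longrightarrow> a = b"
   and ad: "\<And>u a v b. (u,a)\<in>M \<Longrightarrow> (v,b)\<in>M \<Longrightarrow> (u+v,a+b)\<in>M"
   and sc: "\<And>u a r. (u,a)\<in>M \<Longrightarrow> (r *\<^sub>R u, r*a)\<in>M"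
   and dm: "\<And>u a. (u,a)\<in>M \<Longrightarrow> a \<le> norm u"
   and m0: "{(r *\<^sub>R x + u, r * norm x) | r u. u \<in> Y} \<subseteq> M"
    using ExtS_D[OF M] by blast+
  have zero: "(0,0) \<in> M"
  proof -
    have "0 \<in> Y" using Y by (simp add: subspace_0)
    then have "(0 *\<^sub>R x + 0, 0 * norm x) \<in> M" using m0 by blast
    then show ?thesis by simp
  qed
  define S where "S = (\<lambda>(u,a). a - norm (u - z)) ` M"
  have key: "a - norm (u - z) \<le> norm (v + z) - b" if "(u,a)\<in>M" "(v,b)\<in>M" for u a v b
  proof -
    have "a + b \<le> norm (u + v)" using dm ad that by blast
    also have "u + v = (u - z) + (v + z)" by simp
    also have "norm \<dots> \<le> norm (u - z) + norm (v + z)" by (rule norm_triangle_ineq)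
    finally show ?thesis by simp
  qed
  define c where "c = Sup S"
  have Sne: "S \<noteq> {}" using zero S_def by blast
  have bdd: "bdd_above S"
  proof (rule bdd_aboveI)
    fix q assume "q \<in> S"
    then obtain u a where "(u,a)\<in>M" "q = a - norm (u - z)" unfolding S_def by auto
    then show "q \<le> norm (0 + z) - 0" using key[OF _ zero] by blast
  qed
  have c1: "a - norm (u - z) \<le> c" if h: "(u,a)\<in>M" for u a
  proof -
    have "a - norm (u - z) \<in> S" unfolding S_def using h by force
    then show ?thesis unfolding c_def using cSup_upper[OF _ bdd] by blast
  qed
  have c2: "c \<le> norm (v + z) - b" if "(v,b)\<in>M" for v b
    unfolding c_def
  proof (rule cSup_least[OF Sne])
    fix q assume "q \<in> S"
    then obtain u a where "(u,a)\<in>M" "q = a - norm (u - z)" unfolding S_def by auto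
    then show "q \<le> norm (v + z) - b" using key that by blast
  qed
  define M' where "M' = {(u + t *\<^sub>R z, a + t * c) | u a t. (u,a)\<in>M}"
  have dom: "a + t * c \<le> norm (u + t *\<^sub>R z)" if h: "(u,a)\<in>M" for u a t
  proof -
    consider "t = 0" | "t > 0" | "t < 0" by linarith
    then show ?thesis
    proof cases
      case 1 then show ?thesis using dm h by simp
    next
      case 2
      have "((1/t) *\<^sub>R u, (1/t)*a) \<in> M" using sc h by blast
      from c2[OF this] have "t * c \<le> t * (norm ((1/t) *\<^sub>R u + z) - (1/t)*a)"
        using 2 by (simp add: mult_left_mono)
      also have "\<dots> = norm (t *\<^sub>R ((1/t) *\<^sub>R u + z)) - a"
        using 2 by (simp add: right_diff_distrib)
      also have "t *\<^sub>R ((1/t) *\<^sub>R u + z) = u + t *\<^sub>R z"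
        using 2 by (simp add: scaleR_add_right)
      finally show ?thesis by simp
    next
      case 3
      have s: "-t > 0" using 3 by simp
      have "((-1/t) *\<^sub>R u, (-1/t)*a) \<in> M" using sc h by blast
      from c1[OF this] have e1: "(-t) * ((-1/t)*a - norm ((-1/t) *\<^sub>R u - z)) \<le> (-t) * c"
        using s by (simp only: mult_left_mono less_imp_le)
      have e2: "(-t) * ((-1/t)*a - norm ((-1/t) *\<^sub>R u - z)) = a - norm ((-t) *\<^sub>R ((-1/t) *\<^sub>R u - z))"
        using s by (simp add: right_diff_distrib)
      have e3: "(-t) *\<^sub>R ((-1/t) *\<^sub>R u - z) = u + t *\<^sub>R z"
        using s by (simp add: scaleR_diff_right)
      have "a - norm (u + t *\<^sub>R z) \<le> (-t) * c" using e1 unfolding e2 e3 .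
      then show ?thesis by simp
    qed
  qed
  have M'g: "a = b" if h1: "(w,a)\<in>M'" and h2: "(w,b)\<in>M'" for w a b
  proof -
    obtain u a1 t where A: "w = u + t *\<^sub>R z" "a = a1 + t * c" "(u,a1)\<in>M" using h1 unfolding M'_def by blast
    obtain v b1 s where B: "w = v + s *\<^sub>R z" "b = b1 + s * c" "(v,b1)\<in>M" using h2 unfolding M'_def by blast
    have ts: "t = s"
    proof (rule ccontr)
      assume ne: "t \<noteq> s"
      have "(u + (-1) *\<^sub>R v, a1 + (-1) * b1) \<in> M" using ad sc A(3) B(3) by blast
      then have "((1/(s - t)) *\<^sub>R (u + (-1) *\<^sub>R v), (1/(s-t)) * (a1 + (-1) * b1)) \<in> M" using sc by blast
      moreover have "u - v = (s - t) *\<^sub>R z" using A(1) B(1) by (simp add: algebra_simps)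
      then have "(1/(s - t)) *\<^sub>R (u + (-1) *\<^sub>R v) = z" using ne by simp
      ultimately have "z \<in> fst ` M" by force
      then show False using z by blast
    qed
    then have "u = v" using A(1) B(1) by simp
    then have "a1 = b1" using g A(3) B(3) by blast
    then show ?thesis using A B ts by simp
  qed
  have M'a: "(w+w',a+b)\<in>M'" if h1: "(w,a)\<in>M'" and h2: "(w',b)\<in>M'" for w w' a b
  proof -
    obtain u a1 t where A: "w = u + t *\<^sub>R z" "a = a1 + t * c" "(u,a1)\<in>M" using h1 unfolding M'_def by blast
    obtain v b1 s where B: "w' = v + s *\<^sub>R z" "b = b1 + s * c" "(v,b1)\<in>M" using h2 unfolding M'_def by blast
    have "(u+v, a1+b1) \<in> M" using ad A(3) B(3) by blast
    moreover have "w + w' = (u+v) + (t+s) *\<^sub>R z" "a + b = (a1+b1) + (t+s)*c"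
      using A B by (simp_all add: algebra_simps)
    ultimately show ?thesis unfolding M'_def by blast
  qed
  have M's: "(r *\<^sub>R w, r*a)\<in>M'" if h1: "(w,a)\<in>M'" for w a r
  proof -
    obtain u a1 t where A: "w = u + t *\<^sub>R z" "a = a1 + t * c" "(u,a1)\<in>M" using h1 unfolding M'_def by blast
    have "(r *\<^sub>R u, r * a1) \<in> M" using sc A(3) by blast
    moreover have "r *\<^sub>R w = r *\<^sub>R u + (r*t) *\<^sub>R z" "r * a = r * a1 + (r*t)*c"
      using A by (simp_all add: algebra_simps)
    ultimately show ?thesis unfolding M'_def by blast
  qed
  have M'd: "a \<le> norm w" if "(w,a)\<in>M'" for w a
    using that dom unfolding M'_def by blast
  have sub: "M \<subseteq> M'"
  proof
    fix p assume "p \<in> M"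
    then obtain u a where "p = (u,a)" "(u,a)\<in>M" by (cases p) auto
    moreover have "(u + 0 *\<^sub>R z, a + 0 * c) \<in> M'" unfolding M'_def using \<open>(u,a)\<in>M\<close> by blast
    ultimately show "p \<in> M'" by simp
  qed
  have "(0 + 1 *\<^sub>R z, 0 + 1 * c) \<in> M'" unfolding M'_def using zero by blast
  then have "(z, c) \<in> M'" by simp
  then have neq: "M' \<noteq> M" using z by (metis fst_conv image_eqI)
  have "M' \<in> ExtS x Y" 
    apply (rule ExtS_I)
    subgoal by (rule M'g)
    subgoal by (rule M'a)
    subgoal by (rule M's)
    subgoal by (rule M'd)
    subgoal by (rule subset_trans[OF m0 sub])
    done
  then show ?thesis using sub neq by blast
qed

lemma HB_norm:
  fixes x :: "'a::real_normed_vector"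
  assumes Y: "subspace Y" and o: "\<forall>u\<in>Y. norm x \<le> norm (x + u)"
  shows "\<exists>g. linear g \<and> (\<forall>v. g v \<le> norm v) \<and> g x = norm x \<and> (\<forall>u\<in>Y. g u = 0)"
proof -
  have "\<forall>C\<in>chains (ExtS x Y). \<exists>U\<in>ExtS x Y. \<forall>X\<in>C. X \<subseteq> U"
  proof
    fix C assume C: "C \<in> chains (ExtS x Y)"
    show "\<exists>U\<in>ExtS x Y. \<forall>X\<in>C. X \<subseteq> U"
    proof (cases "C = {}")
      case True then show ?thesis using M0_in[OF Y o] by blast
    next
      case False then show ?thesis using chain_in[OF C False] by blast
    qed
  qed
  from Zorn_Lemma2[OF this] obtain M where M: "M \<in> ExtS x Y"
    and mx: "\<And>X. X \<in> ExtS x Y \<Longrightarrow> M \<subseteq> X \<Longrightarrow> X = M" by blast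
  have full: "v \<in> fst ` M" for v
  proof (rule ccontr)
    assume "v \<notin> fst ` M"
    from extend[OF Y M this] obtain M' where "M' \<in> ExtS x Y" "M \<subseteq> M'" "M' \<noteq> M" by blast
    then show False using mx by blast
  qed
  note D = ExtS_D[OF M]
  define g where "g v = (THE a. (v,a) \<in> M)" for v
  have gin: "(v, g v) \<in> M" for v
  proof -
    obtain a where a: "(v,a) \<in> M" using full[of v] by force
    have "(THE a. (v,a) \<in> M) = a" using a D(1) by blast
    then show ?thesis using a g_def by simp
  qed
  have gval: "g v = a" if "(v,a) \<in> M" for v a using D(1)[OF gin that] .
  have "linear g"
  proof (rule linearI)
    fix u v show "g (u + v) = g u + g v" using gval[OF D(2)[OF gin gin]] .
  next
    fix r u show "g (r *\<^sub>R u) = r *\<^sub>R g u" using gval[OF D(3)[OF gin]] by simp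
  qed
  moreover have "\<forall>v. g v \<le> norm v" using D(4)[OF gin] by blast
  moreover have "g x = norm x"
  proof -
    have "0 \<in> Y" using Y by (simp add: subspace_0)
    then have "(1 *\<^sub>R x + 0, 1 * norm x) \<in> M" using D(5) by blast
    then show ?thesis using gval by simp
  qed
  moreover have "\<forall>u\<in>Y. g u = 0"
  proof
    fix u assume "u \<in> Y"
    then have "(0 *\<^sub>R x + u, 0 * norm x) \<in> M" using D(5) by blast
    then show "g u = 0" using gval by simp
  qed
  ultimately show ?thesis by blast
qed



lemma generic:
  fixes sm :: "'k::{real_normed_field,heine_borel} \<Rightarrow> 'a::real_normed_vector \<Rightarrow> 'a"
  assumes A1: "\<And>a b v. sm (a+b) v = sm a v + sm b v"
    and A3: "\<And>a v. norm (sm a v) = norm a * norm v"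
    and A4: "\<And>y. BJ_orth sm x y \<Longrightarrow> \<exists>G. dual_functional sm G \<and> onorm G = 1 \<and> G x = of_real (norm x) \<and> G y = 0"
    and x0: "x \<noteq> 0" and rs: "right_symmetric sm x" and sp: "smooth_point sm x"
  shows "left_symmetric sm x"
  unfolding left_symmetric_def
proof (intro allI impI)
  fix y assume xy: "BJ_orth sm x y"
  define f where "f a = norm (y + sm a x)" for a
  have sm0: "sm 0 v = 0" for v using A3[of 0 v] by simp
  have smd: "sm a v - sm b v = sm (a - b) v" for a b v
    using A1[of "a - b" b v] by simp
  have nx: "norm x > 0" using x0 by simp
  define R where "R = 2 * norm y / norm x"
  have lip: "(norm x)-lipschitz_on UNIV f"
  proof (rule lipschitz_onI)
    fix a b :: 'k
    have "dist (f a) (f b) \<le> norm ((y + sm a x) - (y + sm b x))"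
      unfolding f_def dist_real_def by (rule norm_triangle_ineq3)
    also have "\<dots> = norm (sm (a - b) x)" by (simp add: smd[symmetric])
    also have "\<dots> = norm x * dist a b" by (simp add: A3 dist_norm)
    finally show "dist (f a) (f b) \<le> norm x * dist a b" .
  qed simp
  have cont: "continuous_on (cball 0 R) f"
    using lipschitz_on_continuous_on[OF lip] continuous_on_subset by blast
  have "R \<ge> 0" unfolding R_def using nx by simp
  then have ne: "cball (0::'k) R \<noteq> {}" by simp
  obtain a0 where a0: "a0 \<in> cball 0 R" and mn: "\<And>b. b \<in> cball 0 R \<Longrightarrow> f a0 \<le> f b"
    using continuous_attains_inf[OF compact_cball ne cont] by blast
  have f0: "f 0 = norm y" unfolding f_def by (simp add: sm0)
  have gmin: "f a0 \<le> f b" for b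
  proof (cases "b \<in> cball 0 R")
    case True then show ?thesis using mn by blast
  next
    case False
    then have "norm b > R" by (simp add: dist_norm)
    then have "norm b * norm x > R * norm x" using nx by simp
    also have "R * norm x = 2 * norm y" unfolding R_def using nx by simp
    finally have h: "norm b * norm x > 2 * norm y" .
    have "norm (sm b x) \<le> norm (y + sm b x) + norm y"
      using norm_triangle_ineq4[of "y + sm b x" y] by simp
    then have "f b \<ge> norm b * norm x - norm y" unfolding f_def by (simp add: A3)
    then have "f b \<ge> f 0" using h f0 by simp
    moreover have "f a0 \<le> f 0" using mn \<open>R \<ge> 0\<close> by simp
    ultimately show ?thesis by simp
  qed
  define w where "w = y + sm a0 x"
  have wx: "BJ_orth sm w x" unfolding BJ_orth_def
  proof
    fix c
    have e: "w + sm c x = y + sm (a0 + c) x" unfolding w_def by (simp add: A1 add.assoc)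
    have "norm w = f a0" by (simp add: f_def w_def)
    moreover have "norm (w + sm c x) = f (a0+c)" by (simp only: f_def e)
    ultimately show "norm w \<le> norm (w + sm c x)" using gmin[of "a0 + c"] by simp
  qed
  then have xw: "BJ_orth sm x w" using rs unfolding right_symmetric_def by blast
  obtain G1 where G1: "dual_functional sm G1" "onorm G1 = 1" "G1 x = of_real (norm x)" "G1 y = 0"
    using A4[OF xy] by blast
  obtain G2 where G2: "dual_functional sm G2" "onorm G2 = 1" "G2 x = of_real (norm x)" "G2 w = 0"
    using A4[OF xw] by blast
  have "G1 = G2" using sp G1 G2 unfolding smooth_point_def by blast
  have lin: "linear G1" using G1(1) unfolding dual_functional_def
    using bounded_linear.linear by blast
  have "G1 w = G1 y + G1 (sm a0 x)" unfolding w_def using lin by (simp add: linear_add)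
  also have "\<dots> = a0 * of_real (norm x)" using G1 unfolding dual_functional_def by simp
  finally have "a0 * of_real (norm x) = 0" using G2(4) \<open>G1 = G2\<close> by simp
  then have "a0 = 0" using x0 by simp
  then have "w = y" unfolding w_def by (simp add: sm0)
  then show "BJ_orth sm y x" using wx by simp
qed

lemma A4_real:
  fixes x :: "'a::real_normed_vector"
  assumes x0: "x \<noteq> 0" and xy: "BJ_orth (scaleR :: real \<Rightarrow> 'a \<Rightarrow> 'a) x y"
  shows "\<exists>G. dual_functional (scaleR :: real \<Rightarrow> 'a \<Rightarrow> 'a) G \<and> onorm G = 1 \<and> G x = of_real (norm x) \<and> G y = 0"
proof -
  define Y where "Y = {c *\<^sub>R y | c. True}"
  have Y: "subspace Y" unfolding subspace_def Y_def
  proof (intro conjI ballI allI)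
    show "0 \<in> {c *\<^sub>R y | c. True}" by (rule CollectI, rule exI[of _ 0]) simp
  next
    fix u v assume "u \<in> {c *\<^sub>R y | c. True}" "v \<in> {c *\<^sub>R y | c. True}"
    then obtain a b where "u = a *\<^sub>R y" "v = b *\<^sub>R y" by blast
    then have "u + v = (a + b) *\<^sub>R y" by (simp add: scaleR_left_distrib)
    then show "u + v \<in> {c *\<^sub>R y | c. True}" by blast
  next
    fix r u assume "u \<in> {c *\<^sub>R y | c. True}"
    then obtain a where "u = a *\<^sub>R y" by blast
    then have "r *\<^sub>R u = (r * a) *\<^sub>R y" by simp
    then show "r *\<^sub>R u \<in> {c *\<^sub>R y | c. True}" by blast
  qed
  have o: "\<forall>u\<in>Y. norm x \<le> norm (x + u)" using xy unfolding Y_def BJ_orth_def by blast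
  obtain g where g: "linear g" "\<forall>v. g v \<le> norm v" "g x = norm x" "\<forall>u\<in>Y. g u = 0"
    using HB_norm[OF Y o] by blast
  have ab: "norm (g v) \<le> norm v * 1" for v
  proof -
    have "g (-v) \<le> norm (-v)" using g(2) by blast
    moreover have "g (-v) = - g v" using g(1) by (simp add: linear_neg)
    ultimately show ?thesis using g(2)[rule_format, of v] by simp
  qed
  have bl: "bounded_linear g"
    by (rule bounded_linear_intro[OF linear_add[OF g(1)] linear_scale[OF g(1)] ab])
  have "onorm g \<le> 1" by (rule onorm_bound) (use ab in simp_all)
  moreover have "norm (g x) \<le> onorm g * norm x" by (rule onorm[OF bl])
  then have "1 \<le> onorm g" using g(3) x0 by simp
  ultimately have "onorm g = 1" by simp
  moreover have "dual_functional (scaleR :: real \<Rightarrow> 'a \<Rightarrow> 'a) g"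
    unfolding dual_functional_def using bl linear_scale[OF g(1)] by simp
  moreover have "y \<in> Y" unfolding Y_def by (rule CollectI, rule exI[of _ 1]) simp
  ultimately show ?thesis using g by auto
qed

lemma A4_complex:
  fixes x :: "'b::real_normed_vector" and cs :: "complex \<Rightarrow> 'b \<Rightarrow> 'b"
  assumes csc: "complex_scaling cs" and x0: "x \<noteq> 0" and xy: "BJ_orth cs x y"
  shows "\<exists>G. dual_functional cs G \<and> onorm G = 1 \<and> G x = of_real (norm x) \<and> G y = 0"
proof -
  have c1: "\<And>r v. cs (complex_of_real r) v = r *\<^sub>R v"
   and c2: "\<And>a b v. cs (a + b) v = cs a v + cs b v"
   and c3: "\<And>a u v. cs a (u + v) = cs a u + cs a v"
   and c4: "\<And>a b v. cs (a * b) v = cs a (cs b v)"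
   and c5: "\<And>a v. norm (cs a v) = cmod a * norm v"
    using csc unfolding complex_scaling_def by blast+
  have sR: "cs a (r *\<^sub>R v) = r *\<^sub>R cs a v" for a r v
  proof -
    have "cs a (r *\<^sub>R v) = cs a (cs (complex_of_real r) v)" by (simp add: c1)
    also have "\<dots> = cs (a * complex_of_real r) v" by (simp add: c4)
    also have "\<dots> = cs (complex_of_real r * a) v" by (simp add: mult.commute)
    also have "\<dots> = r *\<^sub>R cs a v" by (simp add: c4 c1)
    finally show ?thesis .
  qed
  define Y where "Y = {cs c y | c. True}"
  have Y: "subspace Y" unfolding subspace_def Y_def
  proof (intro conjI ballI allI)
    have "cs 0 y = 0" using c5[of 0 y] by simp
    then show "0 \<in> {cs c y | c. True}" by (metis (mono_tags, lifting) mem_Collect_eq)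
  next
    fix u v assume "u \<in> {cs c y | c. True}" "v \<in> {cs c y | c. True}"
    then obtain a b where "u = cs a y" "v = cs b y" by blast
    then have "u + v = cs (a + b) y" by (simp add: c2)
    then show "u + v \<in> {cs c y | c. True}" by blast
  next
    fix r u assume "u \<in> {cs c y | c. True}"
    then obtain a where "u = cs a y" by blast
    then have "r *\<^sub>R u = cs (complex_of_real r * a) y" by (simp add: c4 c1)
    then show "r *\<^sub>R u \<in> {cs c y | c. True}" by blast
  qed
  have o: "\<forall>u\<in>Y. norm x \<le> norm (x + u)" using xy unfolding Y_def BJ_orth_def by blast
  obtain g where g: "linear g" "\<forall>v. g v \<le> norm v" "g x = norm x" "\<forall>u\<in>Y. g u = 0"
    using HB_norm[OF Y o] by blast
  have gadd: "g (u + v) = g u + g v" for u v using g(1) by (simp add: linear_add)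
  have gsc: "g (r *\<^sub>R v) = r * g v" for r v using g(1) by (simp add: linear_scale)
  define G where "G v = Complex (g v) (- g (cs \<i> v))" for v
  have ii: "cs \<i> (cs \<i> v) = - v" for v
  proof -
    have "cs \<i> (cs \<i> v) = cs (complex_of_real (-1)) v" by (simp add: c4[symmetric])
    also have "\<dots> = - v" by (simp only: c1) simp
    finally show ?thesis .
  qed
  have gneg: "g (- v) = - g v" for v using gsc[of "-1" v] by simp
  have Gadd: "G (u + v) = G u + G v" for u v unfolding G_def by (simp add: c3 gadd complex_eq_iff)
  have Gsc: "G (r *\<^sub>R v) = r *\<^sub>R G v" for r v unfolding G_def
    by (simp add: sR gsc complex_eq_iff)
  have Gi: "G (cs \<i> v) = \<i> * G v" for v unfolding G_def
    by (simp add: ii gneg complex_eq_iff)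
  have Gcs: "G (cs c v) = c * G v" for c v
  proof -
    have "c = complex_of_real (Re c) + complex_of_real (Im c) * \<i>" by (simp add: complex_eq_iff)
    then have "cs c v = Re c *\<^sub>R v + Im c *\<^sub>R cs \<i> v"
      by (metis c1 c2 c4)
    then have "G (cs c v) = Re c *\<^sub>R G v + Im c *\<^sub>R (\<i> * G v)" by (simp add: Gadd Gsc Gi)
    also have "\<dots> = c * G v" by (simp add: complex_eq_iff)
    finally show ?thesis .
  qed
  have ReG: "Re (G v) = g v" for v unfolding G_def by simp
  have ab: "norm (G v) \<le> norm v * 1" for v
  proof (cases "G v = 0")
    case True then show ?thesis by simp
  next
    case False
    define s where "s = cnj (sgn (G v))"
    have "G (cs s v) = s * G v" by (rule Gcs)
    also have "s * G v = complex_of_real (cmod (G v))"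
      unfolding s_def using False
      by (simp add: sgn_div_norm complex_eq_iff power2_eq_square[symmetric] cmod_power2 field_simps)
    finally have "cmod (G v) = g (cs s v)" using ReG[of "cs s v"] by simp
    also have "\<dots> \<le> norm (cs s v)" using g(2) by blast
    also have "\<dots> = norm v" unfolding s_def using False by (simp add: c5 norm_sgn)
    finally show ?thesis by simp
  qed
  have bl: "bounded_linear G"
    by (rule bounded_linear_intro[OF Gadd Gsc ab])
  have Gx: "G x = complex_of_real (norm x)"
  proof -
    have r: "Re (G x) = norm x" using ReG g(3) by simp
    have "cmod (G x) \<le> norm x" using ab[of x] by simp
    then have "(cmod (G x))^2 \<le> (norm x)^2" by (simp add: power_mono)
    then have "(Im (G x))^2 \<le> 0" using r by (simp add: cmod_power2)
    then have "Im (G x) = 0" by simp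
    then show ?thesis using r by (simp add: complex_eq_iff)
  qed
  have "onorm G \<le> 1" by (rule onorm_bound) (use ab in simp_all)
  moreover have "norm (G x) \<le> onorm G * norm x" by (rule onorm[OF bl])
  then have "1 \<le> onorm G" using Gx x0 by simp
  ultimately have "onorm G = 1" by simp
  moreover have "dual_functional cs G"
    unfolding dual_functional_def using bl Gcs by simp
  moreover have "G y = 0"
  proof -
    have "y = cs 1 y" using c1[of 1 y] by simp
    then have "y \<in> Y" unfolding Y_def by blast
    moreover have "cs \<i> y \<in> Y" unfolding Y_def by blast
    ultimately show ?thesis unfolding G_def using g(4) by (simp add: complex_eq_iff)
  qed
  ultimately show ?thesis using Gx by blast
qed


theorem lemma3p16:
  fixes x :: "'a::banach" and z :: "'b::banach" and cs :: "complex \<Rightarrow> 'b \<Rightarrow> 'b"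
  shows "(x \<noteq> 0 \<and> right_symmetric (scaleR :: real \<Rightarrow> 'a \<Rightarrow> 'a) x \<and> smooth_point (scaleR :: real \<Rightarrow> 'a \<Rightarrow> 'a) x
            \<longrightarrow> left_symmetric (scaleR :: real \<Rightarrow> 'a \<Rightarrow> 'a) x)
       \<and> (complex_scaling cs \<and> z \<noteq> 0 \<and> right_symmetric cs z \<and> smooth_point cs z
            \<longrightarrow> left_symmetric cs z)"
proof (intro conjI impI)
  assume h: "x \<noteq> 0 \<and> right_symmetric (scaleR :: real \<Rightarrow> 'a \<Rightarrow> 'a) x \<and> smooth_point (scaleR :: real \<Rightarrow> 'a \<Rightarrow> 'a) x"
  show "left_symmetric (scaleR :: real \<Rightarrow> 'a \<Rightarrow> 'a) x"
  proof (rule generic)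
    show "\<And>a b v. (a + b) *\<^sub>R v = a *\<^sub>R v + b *\<^sub>R (v::'a)" by (simp add: scaleR_left_distrib)
    show "\<And>a v. norm (a *\<^sub>R v) = norm a * norm (v::'a)" by simp
    show "\<And>y. BJ_orth (scaleR :: real \<Rightarrow> 'a \<Rightarrow> 'a) x y \<Longrightarrow> \<exists>G. dual_functional (scaleR :: real \<Rightarrow> 'a \<Rightarrow> 'a) G \<and> onorm G = 1 \<and> G x = of_real (norm x) \<and> G y = 0"
      using A4_real h by blast
  qed (use h in auto)
next
  assume h: "complex_scaling cs \<and> z \<noteq> 0 \<and> right_symmetric cs z \<and> smooth_point cs z"
  then have csc: "complex_scaling cs" by blast
  show "left_symmetric cs z"
  proof (rule generic)
    show "\<And>a b v. cs (a + b) v = cs a v + cs b v" using csc unfolding complex_scaling_def by blast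
    show "\<And>a v. norm (cs a v) = norm a * norm v" using csc unfolding complex_scaling_def by blast
    show "\<And>y. BJ_orth cs z y \<Longrightarrow> \<exists>G. dual_functional cs G \<and> onorm G = 1 \<and> G z = of_real (norm z) \<and> G y = 0"
      using A4_complex csc h by blast
  qed (use h in auto)
qed

end
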